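(* In the reduction instance $NTP([a_j]_{j\in A},W)$, every feasible schedule $S$ satisfies $B(S)=\sum_{k\in A}b_{i_k}$, i.e. all potential bumps are caused by critical employees.
   Context: Reduction instance. Let $N\ge1$, $A=\{1,\dots,N\}$, positive integers $a_1,\dots,a_N$, positive integer $W\le\sum_{j\in A}a_j$. Set $M=N+\sum_{j\in A}a_j+1$, employees $\mathcal E=\{1,\dots,M\}$ (smaller index = more senior). For $k\in A$: $i_k=k+\sum_{j=1}^{k-1}a_j$ (critical employees), $\mathcal E^S_k=\{i: i_k<i\le i_k+a_k\}$ (stable block), $\mathcal E^S=\bigcup_k\mathcal E^S_k$. Response delays: $r_{i_k}=\sum_{j=1}^{k}a_j$; for $i\in\mathcal E^S_k$, $r_i=\sum_{j=1}^{k-1}a_j$; $r_M=\sum_{j\in A}a_j$. Let $C^*_0=2\sum_j a_j$ and $H=C^*_0-W$. A schedule $S=(s_i,e_i)_{i\in\mathcal E}$ has $s_i\ge0$, $e_i=s_i+r_i$; it is feasible if $s_1\le\dots\le s_M$ and $e_i\le H$ for all $i$. $b_i=|\{j: i<j,\ e_j<e_i\}|$, $B(S)=\sum_i b_i$. *)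

theory Defs
  imports Complex_Main
begin

definition total :: "nat \<Rightarrow> (nat \<Rightarrow> nat) \<Rightarrow> nat" where
  "total N a = (\<Sum>j=1..N. a j)"

definition nemp :: "nat \<Rightarrow> (nat \<Rightarrow> nat) \<Rightarrow> nat" where
  "nemp N a = N + total N a + 1"

definition crit :: "(nat \<Rightarrow> nat) \<Rightarrow> nat \<Rightarrow> nat" where
  "crit a k = k + (\<Sum>j=1..<k. a j)"

definition stable_block :: "(nat \<Rightarrow> nat) \<Rightarrow> nat \<Rightarrow> nat set" where
  "stable_block a k = {i. crit a k < i \<and> i \<le> crit a k + a k}"

definition resp :: "nat \<Rightarrow> (nat \<Rightarrow> nat) \<Rightarrow> nat \<Rightarrow> nat" where
  "resp N a i =
    (if i = nemp N a then total N a
     else if \<exists>k\<in>{1..N}. i = crit a k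
       then (\<Sum>j=1..(THE k. k \<in> {1..N} \<and> i = crit a k). a j)
     else (\<Sum>j=1..<(THE k. k \<in> {1..N} \<and> i \<in> stable_block a k). a j))"

definition horizon :: "nat \<Rightarrow> (nat \<Rightarrow> nat) \<Rightarrow> nat \<Rightarrow> real" where
  "horizon N a W = real (2 * total N a) - real W"

definition etime :: "nat \<Rightarrow> (nat \<Rightarrow> nat) \<Rightarrow> (nat \<Rightarrow> real) \<Rightarrow> nat \<Rightarrow> real" where
  "etime N a s i = s i + real (resp N a i)"

definition feasible :: "nat \<Rightarrow> (nat \<Rightarrow> nat) \<Rightarrow> nat \<Rightarrow> (nat \<Rightarrow> real) \<Rightarrow> bool" where
  "feasible N a W s \<longleftrightarrow>
     (\<forall>i\<in>{1..nemp N a}. 0 \<le> s i) \<and>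
     (\<forall>i\<in>{1..nemp N a}. \<forall>j\<in>{1..nemp N a}. i \<le> j \<longrightarrow> s i \<le> s j) \<and>
     (\<forall>i\<in>{1..nemp N a}. etime N a s i \<le> horizon N a W)"

definition bumps :: "nat \<Rightarrow> (nat \<Rightarrow> nat) \<Rightarrow> (nat \<Rightarrow> real) \<Rightarrow> nat \<Rightarrow> nat" where
  "bumps N a s i = card {j\<in>{1..nemp N a}. i < j \<and> etime N a s j < etime N a s i}"

definition total_bumps :: "nat \<Rightarrow> (nat \<Rightarrow> nat) \<Rightarrow> (nat \<Rightarrow> real) \<Rightarrow> nat" where
  "total_bumps N a s = (\<Sum>i=1..nemp N a. bumps N a s i)"

end

theory Submission
  imports Defs
begin

lemma crit_Suc: "1 \<le> k \<Longrightarrow> crit a (Suc k) = crit a k + 1 + a k"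
  unfolding crit_def by simp

lemma crit_lt: "1 \<le> k \<Longrightarrow> k < k' \<Longrightarrow> crit a k + a k < crit a k'"
proof (induction k')
  case 0 then show ?case by simp
next
  case (Suc m)
  show ?case
  proof (cases "k = m")
    case True then show ?thesis using Suc crit_Suc[of k a] by simp
  next
    case False
    then have "crit a k + a k < crit a m" using Suc by simp
    moreover have "crit a (Suc m) = crit a m + 1 + a m" using Suc False crit_Suc[of m a] by simp
    ultimately show ?thesis by simp
  qed
qed

lemma crit_le: "1 \<le> k \<Longrightarrow> k \<le> k' \<Longrightarrow> crit a k \<le> crit a k'"
  using crit_lt[of k k' a] by (cases "k = k'") auto

lemma crit_inj: "inj_on (crit a) {1..N}"
proof (rule inj_onI)
  fix x y assume "x \<in> {1..N}" "y \<in> {1..N}" "crit a x = crit a y"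
  then show "x = y" using crit_lt[of x y a] crit_lt[of y x a]
    by (cases x y rule: linorder_cases) auto
qed

lemma crit_ge: "k \<le> crit a k" unfolding crit_def by simp

lemma critN: "1 \<le> N \<Longrightarrow> crit a N + a N + 1 = nemp N a"
  unfolding crit_def nemp_def total_def
  by (simp add: sum.atLeastLessThan_Suc atLeastLessThanSuc_atLeastAtMost[symmetric] del: atLeastLessThanSuc_atLeastAtMost)

lemma crit_lt_nemp: "k \<in> {1..N} \<Longrightarrow> crit a k < nemp N a"
  using crit_le[of k N a] critN[of N a] by auto

lemma stable_lt_nemp: "k \<in> {1..N} \<Longrightarrow> i \<in> stable_block a k \<Longrightarrow> i < nemp N a"
  using crit_lt[of k N a] critN[of N a] unfolding stable_block_def
  by (cases "k = N") auto

lemma stable_not_crit: "1 \<le> k \<Longrightarrow> 1 \<le> k' \<Longrightarrow> i \<in> stable_block a k \<Longrightarrow> i \<noteq> crit a k'"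
  using crit_le[of k' k a] crit_lt[of k k' a] unfolding stable_block_def
  by (cases "k' \<le> k") auto

lemma stable_unique: "1 \<le> p \<Longrightarrow> 1 \<le> q \<Longrightarrow> i \<in> stable_block a p \<Longrightarrow> i \<in> stable_block a q \<Longrightarrow> p = q"
  using crit_lt[of p q a] crit_lt[of q p a] unfolding stable_block_def
  by (cases p q rule: linorder_cases) auto

lemma resp_crit: "k \<in> {1..N} \<Longrightarrow> resp N a (crit a k) = (\<Sum>j=1..k. a j)"
proof -
  assume k: "k \<in> {1..N}"
  have "(THE k'. k' \<in> {1..N} \<and> crit a k = crit a k') = k"
    using k inj_onD[OF crit_inj[where a=a and N=N]] by (intro the_equality) auto
  then show ?thesis using k crit_lt_nemp[OF k, of a] unfolding resp_def by auto
qed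

lemma resp_stable: "k \<in> {1..N} \<Longrightarrow> i \<in> stable_block a k \<Longrightarrow> resp N a i = (\<Sum>j=1..<k. a j)"
proof -
  assume k: "k \<in> {1..N}" and i: "i \<in> stable_block a k"
  have "(THE k'. k' \<in> {1..N} \<and> i \<in> stable_block a k') = k"
    using k i stable_unique[where p=k and i=i and a=a] by (intro the_equality) auto
  moreover have "\<not> (\<exists>k'\<in>{1..N}. i = crit a k')" using stable_not_crit[where k=k and i=i and a=a] k i by auto
  ultimately show ?thesis using stable_lt_nemp[OF k i] unfolding resp_def by auto
qed

lemma cover:
  assumes "1 \<le> N" "1 \<le> j" "j < nemp N a" "j \<notin> crit a ` {1..N}"
  shows "\<exists>k\<in>{1..N}. j \<in> stable_block a k"
proof -
  define S where "S = {k\<in>{1..N}. crit a k \<le> j}"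
  have "1 \<in> S" using assms unfolding S_def crit_def by auto
  hence fin: "finite S" "S \<noteq> {}" unfolding S_def by auto
  define K where "K = Max S"
  have KS: "K \<in> S" using fin K_def by simp
  hence K: "K \<in> {1..N}" "crit a K \<le> j" unfolding S_def by auto
  hence lt: "crit a K < j" using assms(4) by (metis image_eqI le_neq_implies_less)
  have "j \<le> crit a K + a K"
  proof (cases "K = N")
    case True then show ?thesis using critN[of N a] assms by simp
  next
    case False
    then have "Suc K \<in> {1..N}" using K by auto
    moreover have "Suc K \<notin> S" using Max_ge[OF fin(1)] K_def by fastforce
    ultimately have "crit a (Suc K) > j" unfolding S_def by auto
    then show ?thesis using crit_Suc[of K a] K by simp
  qed
  then show ?thesis using K lt unfolding stable_block_def by auto
qed

lemma zero_bumps: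
  assumes N: "1 \<le> N" and f: "feasible N a W s"
    and i: "i \<in> {1..nemp N a}" "i \<notin> crit a ` {1..N}"
  shows "bumps N a s i = 0"
proof -
  have "{j\<in>{1..nemp N a}. i < j \<and> etime N a s j < etime N a s i} = {}"
  proof (cases "i = nemp N a")
    case True then show ?thesis by auto
  next
    case False
    then obtain k where k: "k \<in> {1..N}" "i \<in> stable_block a k"
    proof -
      have "1 \<le> i" "i < nemp N a" using i False by auto
      then show ?thesis using cover[OF N _ _ i(2)] that by blast
    qed
    have ri: "resp N a i = (\<Sum>j=1..<k. a j)" using resp_stable[OF k] .
    { fix j assume j: "j \<in> {1..nemp N a}" "i < j"
      have "resp N a i \<le> resp N a j"
      proof -
        consider "j = nemp N a" | "j \<in> crit a ` {1..N}"
          | "j < nemp N a" "j \<notin> crit a ` {1..N}"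
          using j by (metis atLeastAtMost_iff le_neq_implies_less)
        then show ?thesis
        proof cases
          case 1
          then have "resp N a j = (\<Sum>j=1..N. a j)" unfolding resp_def total_def by simp
          moreover have "(\<Sum>j=1..<k. a j) \<le> (\<Sum>j=1..N. a j)"
            using k by (intro sum_mono2) auto
          ultimately show ?thesis using ri by simp
        next
          case 2
          then obtain k' where k': "k' \<in> {1..N}" "j = crit a k'" by auto
          have "k < k'"
          proof (rule ccontr)
            assume "\<not> k < k'"
            then have "crit a k' \<le> crit a k" using crit_le[of k' k a] k' by auto
            then show False using k j k' unfolding stable_block_def by auto
          qed
          then have "(\<Sum>j=1..<k. a j) \<le> (\<Sum>j=1..k'. a j)" by (intro sum_mono2) auto
          then show ?thesis using ri resp_crit[OF k'(1), of a] k' by simp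
        next
          case 3
          then obtain k' where k': "k' \<in> {1..N}" "j \<in> stable_block a k'"
            using cover[OF N _ 3(1) 3(2)] j by auto
          have "k \<le> k'"
          proof (rule ccontr)
            assume "\<not> k \<le> k'"
            then have "crit a k' + a k' < crit a k" using crit_lt[of k' k a] k' by auto
            then show False using k j k' unfolding stable_block_def by auto
          qed
          then have "(\<Sum>j=1..<k. a j) \<le> (\<Sum>j=1..<k'. a j)" by (intro sum_mono2) auto
          then show ?thesis using ri resp_stable[OF k'] by simp
        qed
      qed
      moreover have "s i \<le> s j" using f j i unfolding feasible_def by auto
      ultimately have "etime N a s i \<le> etime N a s j" unfolding etime_def by simp
    }
    then show ?thesis using not_less by blast
  qed
  then show ?thesis unfolding bumps_def by simp
qed

theorem corollary3:
  fixes N W :: nat and a :: "nat \<Rightarrow> nat" and s :: "nat \<Rightarrow> real"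
  assumes "N \<ge> 1"
    and "\<forall>j\<in>{1..N}. a j > 0"
    and "W > 0" and "W \<le> total N a"
    and "feasible N a W s"
  shows "total_bumps N a s = (\<Sum>k=1..N. bumps N a s (crit a k))"
proof -
  have sub: "crit a ` {1..N} \<subseteq> {1..nemp N a}"
  proof
    fix x assume "x \<in> crit a ` {1..N}"
    then obtain k where "k \<in> {1..N}" "x = crit a k" by auto
    then show "x \<in> {1..nemp N a}" using crit_lt_nemp[of k N a] crit_ge[of k a] by auto
  qed
  have "total_bumps N a s = (\<Sum>i\<in>crit a ` {1..N}. bumps N a s i)"
    unfolding total_bumps_def
    using zero_bumps[OF assms(1,5)] by (intro sum.mono_neutral_right[OF _ sub]) auto
  also have "\<dots> = (\<Sum>k=1..N. bumps N a s (crit a k))"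
    by (rule sum.reindex[OF crit_inj, unfolded comp_def])
  finally show ?thesis .
qed

end
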